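(* Let $m,n,k$ be positive integers with $(m,k-1)=1$ and $n=\mathrm{ind}_m(k)$, and let $G=G(m,n,k)=\langle a,b;\ a^m=1,\ b^n=1,\ b^{-1}ab=a^k\rangle$. For every $g\in G$, $\rho(g)$ and $\lambda(g)$ are mu-maps; specifically, for $r\in\mathbb{Z}_m$, $s\in\mathbb{Z}_n$, $\rho(a^rb^s)=\mu(k_s,rk^s)$ and $\lambda(a^rb^s)=\mu(-k_s,-rk^s)$.
   Context: $\mathrm{ind}_m(k)$ is the least positive integer $d$ with $k^d\equiv1\pmod m$; $k_t=k^t-1\pmod m$. Elements of $G$ are written uniquely as $a^ib^j$, $i\in\mathbb{Z}_m$, $j\in\mathbb{Z}_n$. Commutators are $[x,y]=x^{-1}y^{-1}xy$; $(x)\rho(g)=[x,g]$ and $(x)\lambda(g)=[g,x]$ (maps written on the right). For $x,y\in\mathbb{Z}_m$, the mu-map $\mu(x,y):G\to G$ is $(a^ib^j)\mu(x,y)=a^N$ with $N=xik^j-yk_j\pmod m$. *)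

theory Defs
  imports "HOL-Algebra.Group" "HOL-Number_Theory.Number_Theory"
begin

text \<open>ind_m(k) is the multiplicative order, i.e. the library's ord m k.\<close>

definition kt :: "nat \<Rightarrow> nat \<Rightarrow> nat \<Rightarrow> int" where
  "kt m k t = (int k ^ t - 1) mod int m"

definition comm :: "('g, 'c) monoid_scheme \<Rightarrow> 'g \<Rightarrow> 'g \<Rightarrow> 'g" where
  "comm G x y = inv\<^bsub>G\<^esub> x \<otimes>\<^bsub>G\<^esub> inv\<^bsub>G\<^esub> y \<otimes>\<^bsub>G\<^esub> x \<otimes>\<^bsub>G\<^esub> y"

definition rho :: "('g, 'c) monoid_scheme \<Rightarrow> 'g \<Rightarrow> 'g \<Rightarrow> 'g" where
  "rho G g x = comm G x g"

definition lam :: "('g, 'c) monoid_scheme \<Rightarrow> 'g \<Rightarrow> 'g \<Rightarrow> 'g" where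
  "lam G g x = comm G g x"

definition normal_ij :: "('g, 'c) monoid_scheme \<Rightarrow> 'g \<Rightarrow> 'g \<Rightarrow> nat \<Rightarrow> nat \<Rightarrow> 'g \<Rightarrow> nat \<times> nat" where
  "normal_ij G a b m n x =
     (THE p. fst p < m \<and> snd p < n \<and> x = a [^]\<^bsub>G\<^esub> fst p \<otimes>\<^bsub>G\<^esub> b [^]\<^bsub>G\<^esub> snd p)"

text \<open>mu-map mu(x,y): a^i b^j \<mapsto> a^N, N = x i k^j - y k_j (mod m); x, y \<in> Z_m given by integer representatives.\<close>
definition mu_map :: "('g, 'c) monoid_scheme \<Rightarrow> 'g \<Rightarrow> 'g \<Rightarrow> nat \<Rightarrow> nat \<Rightarrow> nat \<Rightarrow> int \<Rightarrow> int \<Rightarrow> 'g \<Rightarrow> 'g" where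
  "mu_map G a b m n k x y g =
     (case normal_ij G a b m n g of (i, j) \<Rightarrow>
        a [^]\<^bsub>G\<^esub> nat ((x * int i * int k ^ j - y * kt m k j) mod int m))"

end

theory Submission
  imports Defs
begin

context group
begin

lemma conj_hom: "c \<in> carrier G \<Longrightarrow> (\<lambda>x. inv c \<otimes> x \<otimes> c) \<in> hom G G"
proof (rule homI)
  fix x y assume c: "c \<in> carrier G" and xy: "x \<in> carrier G" "y \<in> carrier G"
  have e: "c \<otimes> (inv c \<otimes> w) = w" if "w \<in> carrier G" for w
    using c that by (simp add: m_assoc[symmetric])
  show "inv c \<otimes> (x \<otimes> y) \<otimes> c = inv c \<otimes> x \<otimes> c \<otimes> (inv c \<otimes> y \<otimes> c)"
    using c xy e[of "y \<otimes> c"] by (simp add: m_assoc)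
qed (auto)

lemma conj_int_pow:
  assumes "c \<in> carrier G" "x \<in> carrier G"
  shows "inv c \<otimes> x [^] (z::int) \<otimes> c = (inv c \<otimes> x \<otimes> c) [^] z"
  using hom_int_pow[OF conj_hom[OF assms(1)] assms(2) is_group is_group] by simp

lemma conj_b_pow:
  assumes a: "a \<in> carrier G" and b: "b \<in> carrier G"
    and rel: "inv b \<otimes> a \<otimes> b = a [^] (k::nat)"
  shows "inv (b [^] (j::nat)) \<otimes> a [^] (z::int) \<otimes> b [^] j = a [^] (z * int k ^ j)"
proof (induction j arbitrary: z)
  case 0
  then show ?case using a by simp
next
  case (Suc j)
  have "inv (b [^] Suc j) \<otimes> a [^] z \<otimes> b [^] Suc j
      = inv b \<otimes> (inv (b [^] j) \<otimes> a [^] z \<otimes> b [^] j) \<otimes> b"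
    using a b by (simp add: inv_mult_group m_assoc)
  also have "\<dots> = inv b \<otimes> a [^] (z * int k ^ j) \<otimes> b" using Suc by simp
  also have "\<dots> = (a [^] k) [^] (z * int k ^ j)" using conj_int_pow[OF b a] rel by simp
  also have "\<dots> = a [^] (z * int k ^ Suc j)"
    using a by (simp add: int_pow_int[symmetric] int_pow_pow mult_ac)
  finally show ?case .
qed

lemma swap_ab:
  assumes a: "a \<in> carrier G" and b: "b \<in> carrier G"
    and rel: "inv b \<otimes> a \<otimes> b = a [^] (k::nat)"
  shows "a [^] (z::int) \<otimes> b [^] (j::nat) = b [^] j \<otimes> a [^] (z * int k ^ j)"
proof -
  have "b [^] j \<otimes> a [^] (z * int k ^ j) = b [^] j \<otimes> (inv (b [^] j) \<otimes> a [^] z \<otimes> b [^] j)"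
    using conj_b_pow[OF a b rel] by simp
  also have "\<dots> = a [^] z \<otimes> b [^] j" using a b
    by (simp add: m_assoc[symmetric])
  finally show ?thesis by simp
qed

lemma pow_mod:
  assumes a: "a \<in> carrier G" and am: "a [^] (m::nat) = \<one>"
  shows "a [^] (z::int) = a [^] (z mod int m)"
proof -
  have "a [^] z = a [^] (int m * (z div int m) + z mod int m)" by simp
  also have "\<dots> = (a [^] int m) [^] (z div int m) \<otimes> a [^] (z mod int m)"
    by (simp only: int_pow_mult[OF a] int_pow_pow[OF a])
  also have "\<dots> = a [^] (z mod int m)" using a am by (simp add: int_pow_int)
  finally show ?thesis .
qed

lemma comm_formula:
  assumes a: "a \<in> carrier G" and b: "b \<in> carrier G"
    and rel: "inv b \<otimes> a \<otimes> b = a [^] (k::nat)"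
  shows "comm G (a [^] (i::int) \<otimes> b [^] (j::nat)) (a [^] (r::int) \<otimes> b [^] (s::nat))
       = a [^] (- (i * int k ^ j) + ((i - r) * int k ^ j + r) * int k ^ s)"
proof -
  note sw = swap_ab[OF a b rel]
  note cj = conj_b_pow[OF a b rel]
  have sw': "a [^] z \<otimes> (b [^] jj \<otimes> y) = b [^] jj \<otimes> (a [^] (z * int k ^ jj) \<otimes> y)"
    if "y \<in> carrier G" for z :: int and jj :: nat and y
    using that a b sw[of z jj] by (simp add: m_assoc[symmetric])
  have cj': "inv (b [^] jj) \<otimes> (a [^] z \<otimes> (b [^] jj \<otimes> y)) = a [^] (z * int k ^ jj) \<otimes> y"
    if "y \<in> carrier G" for z :: int and jj :: nat and y
    using that a b cj[of jj z] by (simp add: m_assoc[symmetric])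
  have aa': "a [^] z \<otimes> (a [^] w \<otimes> y) = a [^] (z + w) \<otimes> y"
    if "y \<in> carrier G" for z w :: int and y
    using that a by (simp add: int_pow_mult m_assoc)
  have bb: "b [^] j \<otimes> (b [^] s \<otimes> y) = b [^] s \<otimes> (b [^] j \<otimes> y)" if "y \<in> carrier G" for y
    using that b by (simp add: m_assoc[symmetric] nat_pow_mult add.commute)
  have ib: "inv (b [^] s) \<otimes> (b [^] s \<otimes> y) = y" if "y \<in> carrier G" for y
    using that b by (simp add: m_assoc[symmetric])
  define w where "w = (i - r) * int k ^ j + r"
  have "comm G (a [^] i \<otimes> b [^] j) (a [^] r \<otimes> b [^] s)
     = inv (b [^] j) \<otimes> (a [^] (-i) \<otimes> (inv (b [^] s) \<otimes> (a [^] (-r) \<otimes> (a [^] i \<otimes> (b [^] j \<otimes> (a [^] r \<otimes> b [^] s))))))"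
    using a b by (simp add: comm_def inv_mult_group int_pow_neg m_assoc)
  also have "\<dots> = inv (b [^] j) \<otimes> (a [^] (-i) \<otimes> (inv (b [^] s) \<otimes> (b [^] j \<otimes> (a [^] ((-r + i) * int k ^ j) \<otimes> (a [^] r \<otimes> b [^] s)))))"
  proof -
    have "a [^] (-r) \<otimes> (a [^] i \<otimes> (b [^] j \<otimes> (a [^] r \<otimes> b [^] s)))
        = b [^] j \<otimes> (a [^] ((-r + i) * int k ^ j) \<otimes> (a [^] r \<otimes> b [^] s))"
      using aa'[where z="-r" and w=i and y="b [^] j \<otimes> (a [^] r \<otimes> b [^] s)"] sw'[where z="-r+i" and jj=j and y="a [^] r \<otimes> b [^] s"] a b
      by simp
    then show ?thesis by (simp only:)
  qed
  also have "\<dots> = inv (b [^] j) \<otimes> (a [^] (-i) \<otimes> (inv (b [^] s) \<otimes> (b [^] j \<otimes> (a [^] w \<otimes> b [^] s))))"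
    using a b aa'[where z="(-r + i) * int k ^ j" and w=r and y="b [^] s"] by (simp add: w_def algebra_simps)
  also have "\<dots> = inv (b [^] j) \<otimes> (a [^] (-i) \<otimes> (inv (b [^] s) \<otimes> (b [^] j \<otimes> (b [^] s \<otimes> a [^] (w * int k ^ s)))))"
    by (simp add: sw)
  also have "\<dots> = inv (b [^] j) \<otimes> (a [^] (-i) \<otimes> (b [^] j \<otimes> a [^] (w * int k ^ s)))"
    using a b by (simp add: bb ib)
  also have "\<dots> = a [^] (-i * int k ^ j) \<otimes> a [^] (w * int k ^ s)"
    using a b by (simp add: cj')
  also have "\<dots> = a [^] (- (i * int k ^ j) + w * int k ^ s)"
    using int_pow_mult[OF a, of "- (i * int k ^ j)" "w * int k ^ s"] by simp
  finally show ?thesis unfolding w_def .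
qed


lemma comm_swap:
  assumes "x \<in> carrier G" "y \<in> carrier G"
  shows "comm G y x = inv (comm G x y)"
  using assms by (simp add: comm_def inv_mult_group m_assoc)

end

lemma mod_fact:
  fixes X Y Z I K M :: int
  shows "((X mod M) * I * K - Y * (Z mod M)) mod M = (X * I * K - Y * Z) mod M"
  by (metis mod_diff_cong mod_mult_left_eq mod_mult_right_eq)

theorem lemma3p2:
  fixes G :: "('g, 'c) monoid_scheme" and m n k :: nat and a b :: 'g
  assumes "0 < m" and "0 < n" and "0 < k"
    and "coprime m (k - 1)"
    and "n = ord m k"
    and "group G"
    and "a \<in> carrier G" and "b \<in> carrier G"
    and "a [^]\<^bsub>G\<^esub> m = \<one>\<^bsub>G\<^esub>" and "b [^]\<^bsub>G\<^esub> n = \<one>\<^bsub>G\<^esub>"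
    and "inv\<^bsub>G\<^esub> b \<otimes>\<^bsub>G\<^esub> a \<otimes>\<^bsub>G\<^esub> b = a [^]\<^bsub>G\<^esub> k"
    and "bij_betw (\<lambda>(i, j). a [^]\<^bsub>G\<^esub> (i::nat) \<otimes>\<^bsub>G\<^esub> b [^]\<^bsub>G\<^esub> (j::nat))
           ({..<m} \<times> {..<n}) (carrier G)"
  shows "\<forall>r<m. \<forall>s<n. \<forall>x\<in>carrier G.
           rho G (a [^]\<^bsub>G\<^esub> r \<otimes>\<^bsub>G\<^esub> b [^]\<^bsub>G\<^esub> s) x
             = mu_map G a b m n k (kt m k s) (int r * int k ^ s) x
         \<and> lam G (a [^]\<^bsub>G\<^esub> r \<otimes>\<^bsub>G\<^esub> b [^]\<^bsub>G\<^esub> s) x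
             = mu_map G a b m n k (- kt m k s) (- (int r * int k ^ s)) x"
proof (intro allI impI ballI)
  interpret group G by (rule assms(6))
  note a = assms(7) and b = assms(8) and am = assms(9) and rel = assms(11) and bij = assms(12)
  fix r s x assume r: "r < m" and s: "s < n" and x: "x \<in> carrier G"
  obtain i j where ij: "i < m" "j < n" and xe: "x = a [^]\<^bsub>G\<^esub> i \<otimes>\<^bsub>G\<^esub> b [^]\<^bsub>G\<^esub> j"
  proof -
    have "x \<in> (\<lambda>(i, j). a [^]\<^bsub>G\<^esub> (i::nat) \<otimes>\<^bsub>G\<^esub> b [^]\<^bsub>G\<^esub> (j::nat)) ` ({..<m} \<times> {..<n})"
      using x bij_betw_imp_surj_on[OF bij] by simp
    then obtain p where p: "p \<in> {..<m} \<times> {..<n}"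
      "x = (\<lambda>(i, j). a [^]\<^bsub>G\<^esub> (i::nat) \<otimes>\<^bsub>G\<^esub> b [^]\<^bsub>G\<^esub> (j::nat)) p"
      by (rule imageE)
    obtain i' j' where pe: "p = (i', j')" by (cases p)
    show ?thesis using that[of i' j'] p unfolding pe by simp
  qed
  have nij: "normal_ij G a b m n x = (i, j)"
    unfolding normal_ij_def
  proof (rule the_equality)
    show "fst (i, j) < m \<and> snd (i, j) < n \<and> x = a [^]\<^bsub>G\<^esub> fst (i, j) \<otimes>\<^bsub>G\<^esub> b [^]\<^bsub>G\<^esub> snd (i, j)"
      using ij xe by simp
  next
    fix p assume p: "fst p < m \<and> snd p < n \<and> x = a [^]\<^bsub>G\<^esub> fst p \<otimes>\<^bsub>G\<^esub> b [^]\<^bsub>G\<^esub> snd p"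
    obtain i' j' where pe: "p = (i', j')" by (cases p)
    have "(\<lambda>(i, j). a [^]\<^bsub>G\<^esub> (i::nat) \<otimes>\<^bsub>G\<^esub> b [^]\<^bsub>G\<^esub> (j::nat)) (i', j')
        = (\<lambda>(i, j). a [^]\<^bsub>G\<^esub> (i::nat) \<otimes>\<^bsub>G\<^esub> b [^]\<^bsub>G\<^esub> (j::nat)) (i, j)"
      using p xe unfolding pe by simp
    moreover have "(i', j') \<in> {..<m} \<times> {..<n}" "(i, j) \<in> {..<m} \<times> {..<n}"
      using p ij unfolding pe by auto
    ultimately show "p = (i, j)"
      using inj_onD[OF bij_betw_imp_inj_on[OF bij]] unfolding pe by blast
  qed
  define E where "E = - (int i * int k ^ j) + ((int i - int r) * int k ^ j + int r) * int k ^ s"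
  have cf: "comm G x (a [^]\<^bsub>G\<^esub> r \<otimes>\<^bsub>G\<^esub> b [^]\<^bsub>G\<^esub> s) = a [^]\<^bsub>G\<^esub> E"
    using comm_formula[OF a b rel, of "int i" j "int r" s] xe unfolding E_def
    by (simp add: int_pow_int)
  have Eeq: "E = (int k ^ s - 1) * int i * int k ^ j - int r * int k ^ s * (int k ^ j - 1)"
    unfolding E_def by (simp add: algebra_simps)
  have m0: "0 < int m" using assms(1) by simp
  have rho_eq: "rho G (a [^]\<^bsub>G\<^esub> r \<otimes>\<^bsub>G\<^esub> b [^]\<^bsub>G\<^esub> s) x = mu_map G a b m n k (kt m k s) (int r * int k ^ s) x"
  proof -
    have "mu_map G a b m n k (kt m k s) (int r * int k ^ s) x
        = a [^]\<^bsub>G\<^esub> ((kt m k s * int i * int k ^ j - int r * int k ^ s * kt m k j) mod int m)"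
      unfolding mu_map_def nij using m0 by (simp add: pow_nat)
    also have "(kt m k s * int i * int k ^ j - int r * int k ^ s * kt m k j) mod int m = E mod int m"
      unfolding kt_def Eeq by (rule mod_fact)
    also have "a [^]\<^bsub>G\<^esub> (E mod int m) = a [^]\<^bsub>G\<^esub> E" by (rule pow_mod[OF a am, symmetric])
    finally show ?thesis using cf by (simp add: rho_def)
  qed
  have lam_eq: "lam G (a [^]\<^bsub>G\<^esub> r \<otimes>\<^bsub>G\<^esub> b [^]\<^bsub>G\<^esub> s) x = mu_map G a b m n k (- kt m k s) (- (int r * int k ^ s)) x"
  proof -
    have "lam G (a [^]\<^bsub>G\<^esub> r \<otimes>\<^bsub>G\<^esub> b [^]\<^bsub>G\<^esub> s) x = a [^]\<^bsub>G\<^esub> (- E)"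
      using cf comm_swap[OF x, of "a [^]\<^bsub>G\<^esub> r \<otimes>\<^bsub>G\<^esub> b [^]\<^bsub>G\<^esub> s"] a b
      by (simp add: lam_def int_pow_neg)
    have "mu_map G a b m n k (- kt m k s) (- (int r * int k ^ s)) x
        = a [^]\<^bsub>G\<^esub> ((- kt m k s * int i * int k ^ j - (- (int r * int k ^ s)) * kt m k j) mod int m)"
      unfolding mu_map_def nij using m0 by (simp add: pow_nat)
    also have "(- kt m k s * int i * int k ^ j - (- (int r * int k ^ s)) * kt m k j) mod int m
        = - ((kt m k s * int i * int k ^ j - int r * int k ^ s * kt m k j)) mod int m"
      by (simp add: algebra_simps)
    also have "\<dots> = - E mod int m"
      using mod_fact[of "int k ^ s - 1" "int m" "int i" "int k ^ j" "int r * int k ^ s" "int k ^ j - 1"]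
      unfolding kt_def Eeq by (metis mod_minus_cong)
    also have "a [^]\<^bsub>G\<^esub> (- E mod int m) = a [^]\<^bsub>G\<^esub> (- E)" by (rule pow_mod[OF a am, symmetric])
    finally show ?thesis using \<open>lam G (a [^]\<^bsub>G\<^esub> r \<otimes>\<^bsub>G\<^esub> b [^]\<^bsub>G\<^esub> s) x = a [^]\<^bsub>G\<^esub> (- E)\<close> by simp
  qed
  show "rho G (a [^]\<^bsub>G\<^esub> r \<otimes>\<^bsub>G\<^esub> b [^]\<^bsub>G\<^esub> s) x = mu_map G a b m n k (kt m k s) (int r * int k ^ s) x
      \<and> lam G (a [^]\<^bsub>G\<^esub> r \<otimes>\<^bsub>G\<^esub> b [^]\<^bsub>G\<^esub> s) x = mu_map G a b m n k (- kt m k s) (- (int r * int k ^ s)) x"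
    using rho_eq lam_eq by blast
qed

end
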